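(* Assume that in any packing of unit balls in $\mathbb{E}^3$, whenever $14$ different members $\mathbf{B}_1,\dots,\mathbf{B}_{14}$ are such that each of $\mathbf{B}_2,\dots,\mathbf{B}_{13}$ touches $\mathbf{B}_1$, the centers of $\mathbf{B}_1$ and $\mathbf{B}_{14}$ are at distance at least $2.52$. Then: if $\mathbf{B}_1,\dots,\mathbf{B}_{13}$ are $13$ different members of a packing of unit balls in $\mathbb{E}^3$ with each of $\mathbf{B}_2,\dots,\mathbf{B}_{13}$ touching $\mathbf{B}_1$, and $\hat{\mathbf{B}}_i$ is the closed ball of radius $\hat r:=1.58731$ concentric with $\mathbf{B}_i$, then $$\mathrm{bd}(\hat{\mathbf{B}}_1)\subset\bigcup_{j=2}^{13}\hat{\mathbf{B}}_j.$$
   Context: A packing of unit balls is a family of closed unit balls in $\mathbb{E}^3$ with pairwise disjoint interiors; two balls touch if their centers are at distance $2$. $\mathrm{bd}$ denotes boundary. *)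

theory Defs
  imports "HOL-Analysis.Analysis"
begin

definition unit_ball_packing :: "(real^3) set set \<Rightarrow> bool" where
  "unit_ball_packing P \<longleftrightarrow>
     (\<forall>B\<in>P. \<exists>c. B = cball c 1) \<and>
     (\<forall>B\<in>P. \<forall>B'\<in>P. B \<noteq> B' \<longrightarrow> interior B \<inter> interior B' = {})"

definition r_hat :: real where "r_hat = 1.58731"

end

theory Submission
  imports Defs
begin

lemma key:
  fixes a x w :: "real^3"
  assumes nx: "norm (x - a) = r" and r: "r > 0" and nw: "norm w = 2"
    and far: "norm (x - (a + w)) > r"
  shows "norm ((a + (4/r^2) *\<^sub>R (x - a)) - (a + w)) > 2"
proof -
  define d where "d = x - a"
  define k where "k = 4 / r^2"
  have dd: "d \<bullet> d = r^2" using nx unfolding d_def by (metis power2_norm_eq_inner)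
  have ww: "w \<bullet> w = 4" using nw by (simp add: power2_norm_eq_inner[symmetric])
  have "norm (d - w) > r" using far unfolding d_def by (simp add: algebra_simps)
  hence "(norm (d - w))^2 > r^2" using r by (simp add: power_strict_mono)
  hence "d \<bullet> d - 2 * (d \<bullet> w) + w \<bullet> w > r^2"
    by (simp add: power2_norm_eq_inner inner_diff_left inner_diff_right inner_commute)
  hence dw: "d \<bullet> w < 2" using dd ww by linarith
  have kpos: "k > 0" using r unfolding k_def by simp
  have kr: "k * r^2 = 4" using r unfolding k_def by simp
  have "(norm (k *\<^sub>R d - w))^2 = k^2 * (d \<bullet> d) - 2 * k * (d \<bullet> w) + w \<bullet> w"
    unfolding power2_norm_eq_inner by (simp add: inner_diff_left inner_diff_right inner_commute power2_eq_square algebra_simps)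
  also have "\<dots> = 4 * k - 2 * k * (d \<bullet> w) + 4" using dd ww kr by (simp add: power2_eq_square algebra_simps)
  also have "\<dots> > 4" using dw kpos by (simp add: algebra_simps)
  finally have "(norm (k *\<^sub>R d - w))^2 > 2^2" by simp
  hence "norm (k *\<^sub>R d - w) > 2"
    by (meson norm_ge_zero power_less_imp_less_base)
  thus ?thesis unfolding d_def k_def by (simp add: algebra_simps)
qed

lemma balls_disj:
  fixes a b :: "real^3"
  assumes "dist a b \<ge> 2"
  shows "ball a 1 \<inter> ball b 1 = {}"
  using assms dist_triangle_less_add[of a _ 1 b 1]
  by (auto simp: dist_commute)
     (smt (verit, best) dist_commute dist_triangle)

theorem mainTheorem12:
  assumes hyp: "\<And>(P :: (real^3) set set) (c :: nat \<Rightarrow> real^3).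
      unit_ball_packing P \<Longrightarrow>
      (\<forall>i\<in>{1..14}. cball (c i) 1 \<in> P) \<Longrightarrow>
      inj_on (\<lambda>i. cball (c i) 1) {1..14} \<Longrightarrow>
      (\<forall>j\<in>{2..13}. dist (c 1) (c j) = 2) \<Longrightarrow>
      dist (c 1) (c 14) \<ge> 2.52"
    and packing: "unit_ball_packing P"
    and members: "\<forall>i\<in>{1..13::nat}. cball (c i) 1 \<in> P"
    and different: "inj_on (\<lambda>i. cball (c i) 1) {1..13::nat}"
    and touching: "\<forall>j\<in>{2..13::nat}. dist (c 1) (c j) = 2"
  shows "sphere (c 1) r_hat \<subseteq> (\<Union>j\<in>{2..13::nat}. cball (c j) r_hat)"
proof
  fix x assume xs: "x \<in> sphere (c 1) r_hat"
  show "x \<in> (\<Union>j\<in>{2..13::nat}. cball (c j) r_hat)"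
  proof (rule ccontr)
    assume nc: "x \<notin> (\<Union>j\<in>{2..13::nat}. cball (c j) r_hat)"
    define r where "r = r_hat"
    have r: "r > 0" unfolding r_def r_hat_def by simp
    define y where "y = c 1 + (4/r^2) *\<^sub>R (x - c 1)"
    have nx: "norm (x - c 1) = r" using xs unfolding r_def by (simp add: dist_norm norm_minus_commute)
    have dy: "dist (c 1) y = 4 / r"
      using nx r unfolding y_def by (simp add: dist_norm power2_eq_square)
    have dy2: "dist (c 1) y \<ge> 2" unfolding dy using r unfolding r_def r_hat_def by simp
    have dy3: "dist (c 1) y < 2.52" unfolding dy using r unfolding r_def r_hat_def by simp
    have farj: "dist (c j) y > 2" if j: "j \<in> {2..13::nat}" for j
    proof -
      define w where "w = c j - c 1"
      have nw: "norm w = 2" using touching j unfolding w_def by (simp add: dist_norm norm_minus_commute)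
      have "dist x (c j) > r" using nc j unfolding r_def by (force simp: dist_commute not_le)
      hence far: "norm (x - (c 1 + w)) > r" unfolding w_def by (simp add: dist_norm)
      have "norm ((c 1 + (4/r^2) *\<^sub>R (x - c 1)) - (c 1 + w)) > 2"
        using key[OF nx r nw far] .
      thus ?thesis unfolding y_def w_def by (simp add: dist_norm norm_minus_commute)
    qed
    define c' where "c' = c(14 := y)"
    define P' where "P' = (\<lambda>i. cball (c' i) 1) ` {1..14::nat}"
    have distall: "dist (c i) y \<ge> 2" if "i \<in> {1..13::nat}" for i
    proof (cases "i = 1")
      case True thus ?thesis using dy2 by simp
    next
      case False thus ?thesis using that farj[of i] by auto
    qed
    have diffcb: "cball (c i) 1 \<noteq> cball y 1" if "i \<in> {1..13::nat}" for i
    proof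
      assume "cball (c i) 1 = cball y 1"
      hence "c i = y" by (simp add: cball_eq_cball_iff)
      thus False using distall[OF that] by simp
    qed
    have inj': "inj_on (\<lambda>i. cball (c' i) 1) {1..14::nat}"
    proof (rule inj_onI)
      fix i j assume i: "i \<in> {1..14::nat}" and j: "j \<in> {1..14::nat}"
        and eq: "cball (c' i) 1 = cball (c' j) 1"
      show "i = j"
      proof (cases "i = 14"; cases "j = 14")
        assume "i = 14" "j = 14" thus ?thesis by simp
      next
        assume a: "i = 14" "j \<noteq> 14"
        hence "j \<in> {1..13}" using j by auto
        thus ?thesis using diffcb[of j] eq a unfolding c'_def by auto
      next
        assume a: "i \<noteq> 14" "j = 14"
        hence "i \<in> {1..13}" using i by auto
        thus ?thesis using diffcb[of i] eq a unfolding c'_def by auto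
      next
        assume a: "i \<noteq> 14" "j \<noteq> 14"
        hence "i \<in> {1..13}" "j \<in> {1..13}" using i j by auto
        thus ?thesis using different eq a unfolding c'_def inj_on_def by auto
      qed
    qed
    have pack': "unit_ball_packing P'"
      unfolding unit_ball_packing_def
    proof (intro conjI ballI impI)
      fix B assume "B \<in> P'" thus "\<exists>c. B = cball c 1" unfolding P'_def by auto
    next
      fix B B' assume B: "B \<in> P'" and B': "B' \<in> P'" and ne: "B \<noteq> B'"
      from B obtain i where i: "i \<in> {1..14::nat}" and Bi: "B = cball (c' i) 1" unfolding P'_def by auto
      from B' obtain j where j: "j \<in> {1..14::nat}" and Bj: "B' = cball (c' j) 1" unfolding P'_def by auto
      have ij: "i \<noteq> j" using ne Bi Bj by auto
      show "interior B \<inter> interior B' = {}"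
      proof (cases "i = 14 \<or> j = 14")
        case True
        show ?thesis
        proof (cases "i = 14")
          case True
          hence "j \<in> {1..13}" using j ij by auto
          thus ?thesis using True Bi Bj distall[of j] balls_disj[of "c j" y] unfolding c'_def by auto
        next
          case False
          hence "j = 14" "i \<in> {1..13}" using \<open>i = 14 \<or> j = 14\<close> i by auto
          thus ?thesis using Bi Bj distall[of i] balls_disj[of "c i" y] unfolding c'_def by auto
        qed
      next
        case False
        hence "i \<in> {1..13}" "j \<in> {1..13}" using i j by auto
        moreover have "cball (c i) 1 \<noteq> cball (c j) 1"
          using ij different calculation unfolding inj_on_def by blast
        moreover have "cball (c i) 1 \<in> P" "cball (c j) 1 \<in> P" using members calculation by auto
        ultimately have "interior (cball (c i) 1) \<inter> interior (cball (c j) 1) = {}"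
          using packing unfolding unit_ball_packing_def by blast
        thus ?thesis using False Bi Bj unfolding c'_def by auto
      qed
    qed
    have mem': "\<forall>i\<in>{1..14}. cball (c' i) 1 \<in> P'" unfolding P'_def by auto
    have t': "\<forall>j\<in>{2..13}. dist (c' 1) (c' j) = 2" using touching unfolding c'_def by auto
    have "dist (c' 1) (c' 14) \<ge> 2.52" using hyp[OF pack' mem' inj' t'] .
    thus False using dy3 unfolding c'_def by simp
  qed
qed

end
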